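(* Let $m\ge 2$ and let $a_1,a_2,b_1,\dots,b_m,c_1,\dots,c_m$ be real numbers with $a_1\ne a_2$, $b_1>b_2>\dots>b_m$, $c_1>c_2>\dots>c_m$, and $a_1+(m-1)a_2=\sum_{i=1}^m(b_i+c_i)$. Let ${\bf B}$ be the $m\times m$ matrix with $B_{ij}=b_i+c_{m+1-i}-a_2$ for $i<j$, $B_{ii}=b_i$, $B_{ij}=0$ for $i>j$; for each $i$ let ${\bf v}_i$ be the eigenvector of ${\bf B}$ with eigenvalue $b_i$ whose $i$-th coordinate is $1$ and whose later coordinates vanish. Assume $b_i+c_k-a_2\ne0$ for all $i,k$ and let $\langle\cdot,\cdot\rangle$ be the real symmetric bilinear form with $\langle{\bf v}_i,{\bf v}_j\rangle=0$ for $i\ne j$ and $$\langle{\bf v}_i,{\bf v}_i\rangle=\frac{\prod_{k=i+1}^m(b_i-b_k)}{\prod_{k=1}^{i-1}(b_i-b_k)}\cdot\frac{\prod_{k=m+2-i}^m(b_i+c_k-a_2)}{\prod_{k=1}^{m+1-i}(b_i+c_k-a_2)}.$$ Then this form is sign-definite (positive- or negative-definite) if and only if one of the following two systems of inequalities holds: (I) $b_{m+1-i}+c_i>a_2>b_{m+1-i}+c_{i+1}$ for $i=1,\dots,m-1$, and $b_1+c_m>a_2$; (II) $b_i+c_{m-i}>a_2>b_i+c_{m+1-i}$ for $i=1,\dots,m-1$, and $a_2>b_m+c_1$. Moreover, if $\epsilon\langle\cdot,\cdot\rangle$ is positive-definite for $\epsilon=\pm1$, then $\epsilon=\mathrm{sign}(a_1-a_2)$;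 if (I) holds then $a_1>a_2$, and if (II) holds then $a_1<a_2$.
   Context: Empty products equal $1$. *)

theory Defs
  imports Complex_Main
begin

text \<open>Vectors in R^m are modelled as functions nat => real supported on {1..m}.\<close>
definition vsp :: "nat \<Rightarrow> (nat \<Rightarrow> real) set" where
  "vsp m = {x. \<forall>k. (k < 1 \<or> m < k) \<longrightarrow> x k = 0}"

definition matvec :: "nat \<Rightarrow> (nat \<Rightarrow> nat \<Rightarrow> real) \<Rightarrow> (nat \<Rightarrow> real) \<Rightarrow> (nat \<Rightarrow> real)" where
  "matvec m B x = (\<lambda>i. if 1 \<le> i \<and> i \<le> m then (\<Sum>j=1..m. B i j * x j) else 0)"

definition sym_bilinear_on :: "nat \<Rightarrow> ((nat \<Rightarrow> real) \<Rightarrow> (nat \<Rightarrow> real) \<Rightarrow> real) \<Rightarrow> bool" where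
  "sym_bilinear_on m F \<longleftrightarrow>
     (\<forall>x\<in>vsp m. \<forall>y\<in>vsp m. F x y = F y x) \<and>
     (\<forall>x\<in>vsp m. \<forall>y\<in>vsp m. \<forall>z\<in>vsp m. F (\<lambda>k. x k + y k) z = F x z + F y z) \<and>
     (\<forall>x\<in>vsp m. \<forall>z\<in>vsp m. \<forall>s::real. F (\<lambda>k. s * x k) z = s * F x z)"

definition pos_definite_on :: "nat \<Rightarrow> ((nat \<Rightarrow> real) \<Rightarrow> (nat \<Rightarrow> real) \<Rightarrow> real) \<Rightarrow> bool" where
  "pos_definite_on m F \<longleftrightarrow> (\<forall>x\<in>vsp m. x \<noteq> (\<lambda>_. 0) \<longrightarrow> F x x > 0)"

definition neg_definite_on :: "nat \<Rightarrow> ((nat \<Rightarrow> real) \<Rightarrow> (nat \<Rightarrow> real) \<Rightarrow> real) \<Rightarrow> bool" where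
  "neg_definite_on m F \<longleftrightarrow> (\<forall>x\<in>vsp m. x \<noteq> (\<lambda>_. 0) \<longrightarrow> F x x < 0)"

definition Bmat :: "nat \<Rightarrow> real \<Rightarrow> (nat \<Rightarrow> real) \<Rightarrow> (nat \<Rightarrow> real) \<Rightarrow> nat \<Rightarrow> nat \<Rightarrow> real" where
  "Bmat m a2 b c i j =
     (if i < j then b i + c (m + 1 - i) - a2 else if i = j then b i else 0)"

definition dval :: "nat \<Rightarrow> real \<Rightarrow> (nat \<Rightarrow> real) \<Rightarrow> (nat \<Rightarrow> real) \<Rightarrow> nat \<Rightarrow> real" where
  "dval m a2 b c i =
     (\<Prod>k=i+1..m. b i - b k) / (\<Prod>k=1..i-1. b i - b k) *
     ((\<Prod>k=m+2-i..m. b i + c k - a2) / (\<Prod>k=1..m+1-i. b i + c k - a2))"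

definition condI :: "nat \<Rightarrow> real \<Rightarrow> (nat \<Rightarrow> real) \<Rightarrow> (nat \<Rightarrow> real) \<Rightarrow> bool" where
  "condI m a2 b c \<longleftrightarrow>
     (\<forall>i\<in>{1..m-1}. b (m+1-i) + c i > a2 \<and> a2 > b (m+1-i) + c (i+1)) \<and> b 1 + c m > a2"

definition condII :: "nat \<Rightarrow> real \<Rightarrow> (nat \<Rightarrow> real) \<Rightarrow> (nat \<Rightarrow> real) \<Rightarrow> bool" where
  "condII m a2 b c \<longleftrightarrow>
     (\<forall>i\<in>{1..m-1}. b i + c (m-i) > a2 \<and> a2 > b i + c (m+1-i)) \<and> a2 > b m + c 1"

end

theory Submission imports Defs begin

lemma prod_sign:
  fixes f :: "nat \<Rightarrow> real"
  assumes "finite A" "\<forall>k\<in>A. f k \<noteq> 0"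
  shows "(0 < prod f A \<longleftrightarrow> even (card {k\<in>A. f k < 0})) \<and> (prod f A < 0 \<longleftrightarrow> odd (card {k\<in>A. f k < 0}))"
  using assms
proof (induction A rule: finite_induct)
  case empty
  then show ?case by simp
next
  case (insert x F)
  have fin: "finite {k\<in>F. f k < 0}" using insert by simp
  have xn: "x \<notin> {k\<in>F. f k < 0}" using insert by simp
  show ?case
  proof (cases "f x < 0")
    case True
    then have "{k\<in>insert x F. f k < 0} = insert x {k\<in>F. f k < 0}" by auto
    then have "card {k\<in>insert x F. f k < 0} = Suc (card {k\<in>F. f k < 0})" using fin xn by simp
    then show ?thesis using insert True by (auto simp: zero_less_mult_iff mult_less_0_iff)
  next
    case False
    then have fx: "f x > 0" using insert by force
    have "{k\<in>insert x F. f k < 0} = {k\<in>F. f k < 0}" using False by auto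
    then show ?thesis using insert fx by (auto simp: zero_less_mult_iff mult_less_0_iff)
  qed
qed

lemma vsp_sum:
  assumes "finite I" "\<forall>i\<in>I. v i \<in> vsp m"
  shows "(\<lambda>k. \<Sum>i\<in>I. \<alpha> i * v i k) \<in> vsp m"
  using assms unfolding vsp_def by auto

lemma F_lin_sum:
  assumes bil: "sym_bilinear_on m F" and "finite I" "\<forall>i\<in>I. v i \<in> vsp m" and z: "z \<in> vsp m"
  shows "F (\<lambda>k. \<Sum>i\<in>I. \<alpha> i * v i k) z = (\<Sum>i\<in>I. \<alpha> i * F (v i) z)"
  using assms(2,3)
proof (induction I rule: finite_induct)
  case empty
  have z0: "(\<lambda>k. 0::real) \<in> vsp m" unfolding vsp_def by simp
  have h: "\<forall>x\<in>vsp m. \<forall>z\<in>vsp m. \<forall>s. F (\<lambda>k. s * x k) z = s * F x z"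
    using bil unfolding sym_bilinear_on_def by blast
  show ?case using h[rule_format, OF z0 z, of 0] by simp
next
  case (insert x I)
  have vx: "v x \<in> vsp m" using insert by simp
  have s1: "(\<lambda>k. \<alpha> x * v x k) \<in> vsp m" using vx unfolding vsp_def by simp
  have s2: "(\<lambda>k. \<Sum>i\<in>I. \<alpha> i * v i k) \<in> vsp m" using vsp_sum[of I v m] insert by simp
  have "F (\<lambda>k. \<Sum>i\<in>insert x I. \<alpha> i * v i k) z
      = F (\<lambda>k. (\<lambda>k. \<alpha> x * v x k) k + (\<lambda>k. \<Sum>i\<in>I. \<alpha> i * v i k) k) z"
    using insert by simp
  also have "\<dots> = F (\<lambda>k. \<alpha> x * v x k) z + F (\<lambda>k. \<Sum>i\<in>I. \<alpha> i * v i k) z"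
  proof -
    have h: "\<forall>x\<in>vsp m. \<forall>y\<in>vsp m. \<forall>z\<in>vsp m. F (\<lambda>k. x k + y k) z = F x z + F y z"
      using bil unfolding sym_bilinear_on_def by blast
    show ?thesis using h[rule_format, OF s1 s2 z] by simp
  qed
  also have "F (\<lambda>k. \<alpha> x * v x k) z = \<alpha> x * F (v x) z"
  proof -
    have h: "\<forall>x\<in>vsp m. \<forall>z\<in>vsp m. \<forall>s. F (\<lambda>k. s * x k) z = s * F x z"
      using bil unfolding sym_bilinear_on_def by blast
    show ?thesis using h[rule_format, OF vx z] by simp
  qed
  finally show ?case using insert by simp
qed

lemma span:
  assumes v_sp: "\<And>i. i \<in> {1..m} \<Longrightarrow> v i \<in> vsp m"
    and v_one: "\<And>i. i \<in> {1..m} \<Longrightarrow> v i i = 1"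
    and v_zero: "\<And>i k. i \<in> {1..m} \<Longrightarrow> i < k \<Longrightarrow> v i k = 0"
  shows "n \<le> m \<Longrightarrow> x \<in> vsp m \<Longrightarrow> (\<forall>k>n. x k = 0) \<Longrightarrow> \<exists>\<alpha>. x = (\<lambda>k. \<Sum>i=1..n. \<alpha> i * v i k)"
proof (induction n arbitrary: x)
  case 0
  then have "x 0 = 0" unfolding vsp_def by auto
  then have "x = (\<lambda>k. 0)" using 0 by (metis neq0_conv)
  then show ?case by simp
next
  case (Suc n)
  define y where "y = (\<lambda>k. x k - x (Suc n) * v (Suc n) k)"
  have vS: "v (Suc n) \<in> vsp m" using v_sp Suc by simp
  have "y \<in> vsp m" using Suc.prems vS unfolding vsp_def y_def by auto
  moreover have "\<forall>k>n. y k = 0"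
  proof (intro allI impI)
    fix k assume "k > n"
    show "y k = 0"
    proof (cases "k = Suc n")
      case True then show ?thesis using v_one[of "Suc n"] Suc.prems by (simp add: y_def)
    next
      case False then show ?thesis using Suc.prems v_zero[of "Suc n" k] \<open>k > n\<close> by (simp add: y_def)
    qed
  qed
  ultimately obtain \<alpha> where a: "y = (\<lambda>k. \<Sum>i=1..n. \<alpha> i * v i k)" using Suc by force
  define \<beta> where "\<beta> = \<alpha>(Suc n := x (Suc n))"
  have "x = (\<lambda>k. \<Sum>i=1..Suc n. \<beta> i * v i k)"
  proof
    fix k
    have "(\<Sum>i=1..n. \<beta> i * v i k) = (\<Sum>i=1..n. \<alpha> i * v i k)"
      by (rule sum.cong) (auto simp: \<beta>_def)
    then have "(\<Sum>i=1..Suc n. \<beta> i * v i k) = y k + x (Suc n) * v (Suc n) k"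
      using a by (simp add: \<beta>_def)
    then show "x k = (\<Sum>i=1..Suc n. \<beta> i * v i k)" by (simp add: y_def)
  qed
  then show ?case by blast
qed

lemma dval_sign:
  fixes b c :: "nat \<Rightarrow> real"
  assumes b_dec: "\<And>i j. 1 \<le> i \<Longrightarrow> i < j \<Longrightarrow> j \<le> m \<Longrightarrow> b i > b j"
    and nonzero: "\<And>i k. i \<in> {1..m} \<Longrightarrow> k \<in> {1..m} \<Longrightarrow> b i + c k - a2 \<noteq> 0"
    and i: "i \<in> {1..m}"
  shows "(0 < dval m a2 b c i \<longleftrightarrow> (even (i-1) \<longleftrightarrow> even (card {k\<in>{1..m}. b i + c k - a2 < 0})))
       \<and> (dval m a2 b c i < 0 \<longleftrightarrow> \<not> (even (i-1) \<longleftrightarrow> even (card {k\<in>{1..m}. b i + c k - a2 < 0})))"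
proof -
  define P1 where "P1 = (\<Prod>k=i+1..m. b i - b k)"
  define Q1 where "Q1 = (\<Prod>k=1..i-1. b i - b k)"
  define P2 where "P2 = (\<Prod>k=m+2-i..m. b i + c k - a2)"
  define D where "D = (\<Prod>k=1..m+1-i. b i + c k - a2)"
  have dv: "dval m a2 b c i = P1 / Q1 * (P2 / D)"
    unfolding dval_def P1_def Q1_def P2_def D_def by simp
  have P1: "P1 > 0" unfolding P1_def proof (intro prod_pos ballI)
    fix k assume "k \<in> {i+1..m}" then show "0 < b i - b k" using i b_dec[of i k] by simp
  qed
  have ltk: "\<And>k. k \<in> {1..i-1} \<Longrightarrow> b i - b k < 0" using i b_dec by fastforce
  have negs: "{k\<in>{1..i-1}. b i - b k < 0} = {1..i-1}" using ltk by blast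
  have Q1: "(0 < Q1 \<longleftrightarrow> even (i-1)) \<and> (Q1 < 0 \<longleftrightarrow> odd (i-1))"
  proof -
    have "\<forall>k\<in>{1..i-1}. b i - b k \<noteq> 0" using ltk by force
    from prod_sign[OF _ this] show ?thesis unfolding Q1_def negs by simp
  qed
  have un: "{m+2-i..m} \<union> {1..m+1-i} = {1..m}" using i by auto
  have PD: "P2 * D = (\<Prod>k=1..m. b i + c k - a2)"
    unfolding P2_def D_def un[symmetric] by (subst prod.union_disjoint) auto
  have PDs: "(0 < P2 * D \<longleftrightarrow> even (card {k\<in>{1..m}. b i + c k - a2 < 0}))
     \<and> (P2 * D < 0 \<longleftrightarrow> odd (card {k\<in>{1..m}. b i + c k - a2 < 0}))"
    unfolding PD using prod_sign[of "{1..m}" "\<lambda>k. b i + c k - a2"] nonzero i by auto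
  have D0: "D \<noteq> 0" unfolding D_def proof (subst prod_zero_iff)
    show "\<not> (\<exists>k\<in>{1..m+1-i}. b i + c k - a2 = 0)" using nonzero[of i] i by fastforce
  qed simp
  have "(0 < P2 / D \<longleftrightarrow> 0 < P2 * D) \<and> (P2 / D < 0 \<longleftrightarrow> P2 * D < 0)"
    using D0 by (auto simp: zero_less_divide_iff zero_less_mult_iff divide_less_0_iff mult_less_0_iff)
  moreover have "(0 < P1 / Q1 \<longleftrightarrow> 0 < Q1) \<and> (P1 / Q1 < 0 \<longleftrightarrow> Q1 < 0)"
    using P1 by (auto simp: zero_less_divide_iff divide_less_0_iff)
  ultimately show ?thesis unfolding dv using Q1 PDs
    unfolding zero_less_mult_iff mult_less_0_iff by blast
qed

theorem theorem2p7:
  fixes m :: nat and a1 a2 :: real and b c :: "nat \<Rightarrow> real"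
    and v :: "nat \<Rightarrow> nat \<Rightarrow> real"
    and F :: "(nat \<Rightarrow> real) \<Rightarrow> (nat \<Rightarrow> real) \<Rightarrow> real"
  assumes m2: "m \<ge> 2"
    and a_ne: "a1 \<noteq> a2"
    and b_dec: "\<And>i j. 1 \<le> i \<Longrightarrow> i < j \<Longrightarrow> j \<le> m \<Longrightarrow> b i > b j"
    and c_dec: "\<And>i j. 1 \<le> i \<Longrightarrow> i < j \<Longrightarrow> j \<le> m \<Longrightarrow> c i > c j"
    and trace: "a1 + (real m - 1) * a2 = (\<Sum>i=1..m. b i + c i)"
    and nonzero: "\<And>i k. i \<in> {1..m} \<Longrightarrow> k \<in> {1..m} \<Longrightarrow> b i + c k - a2 \<noteq> 0"
    and v_sp: "\<And>i. i \<in> {1..m} \<Longrightarrow> v i \<in> vsp m"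
    and v_eig: "\<And>i. i \<in> {1..m} \<Longrightarrow> matvec m (Bmat m a2 b c) (v i) = (\<lambda>k. b i * v i k)"
    and v_one: "\<And>i. i \<in> {1..m} \<Longrightarrow> v i i = 1"
    and v_zero: "\<And>i k. i \<in> {1..m} \<Longrightarrow> i < k \<Longrightarrow> v i k = 0"
    and F_bil: "sym_bilinear_on m F"
    and F_orth: "\<And>i j. i \<in> {1..m} \<Longrightarrow> j \<in> {1..m} \<Longrightarrow> i \<noteq> j \<Longrightarrow> F (v i) (v j) = 0"
    and F_diag: "\<And>i. i \<in> {1..m} \<Longrightarrow> F (v i) (v i) = dval m a2 b c i"
  shows "(pos_definite_on m F \<or> neg_definite_on m F \<longleftrightarrow> condI m a2 b c \<or> condII m a2 b c)
    \<and> (pos_definite_on m F \<longrightarrow> a1 > a2)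
    \<and> (neg_definite_on m F \<longrightarrow> a1 < a2)
    \<and> (condI m a2 b c \<longrightarrow> a1 > a2)
    \<and> (condII m a2 b c \<longrightarrow> a1 < a2)"
proof -
  define N where "N i = card {k\<in>{1..m}. b i + c k - a2 < 0}" for i
  have sgn: "\<And>i. i\<in>{1..m} \<Longrightarrow> (0 < dval m a2 b c i \<longleftrightarrow> (even (i-1) \<longleftrightarrow> even (N i)))
       \<and> (dval m a2 b c i < 0 \<longleftrightarrow> \<not> (even (i-1) \<longleftrightarrow> even (N i)))"
    unfolding N_def by (rule dval_sign[OF b_dec nonzero]) auto
  have nz: "\<And>i k. i \<in> {1..m} \<Longrightarrow> k \<in> {1..m} \<Longrightarrow> \<not> b i + c k - a2 < 0 \<Longrightarrow> b i + c k - a2 > 0"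
    using nonzero by force
  have Nmono: "N i \<le> N j" if "1 \<le> i" "i \<le> j" "j \<le> m" for i j
  proof -
    have "b j \<le> b i" using b_dec[of i j] that by (cases "i = j") auto
    then have "{k\<in>{1..m}. b i + c k - a2 < 0} \<subseteq> {k\<in>{1..m}. b j + c k - a2 < 0}" by auto
    then show ?thesis unfolding N_def by (intro card_mono) auto
  qed
  have Nle: "N i \<le> m" for i
  proof -
    have "N i \<le> card {1..m}" unfolding N_def by (intro card_mono) auto
    then show ?thesis by simp
  qed
  have Nlow: "m + 1 - t \<le> N i" if "i \<in> {1..m}" "t \<in> {1..m}" "b i + c t - a2 < 0" for i t
  proof -
    have "{t..m} \<subseteq> {k\<in>{1..m}. b i + c k - a2 < 0}"
    proof
      fix k assume k: "k \<in> {t..m}"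
      have "c k \<le> c t" using c_dec[of t k] k that by (cases "k = t") auto
      then show "k \<in> {k\<in>{1..m}. b i + c k - a2 < 0}" using k that by auto
    qed
    then have "card {t..m} \<le> N i" unfolding N_def by (intro card_mono) auto
    then show ?thesis by simp
  qed
  have Nhigh: "N i \<le> m - t" if "i \<in> {1..m}" "t \<in> {1..m}" "b i + c t - a2 > 0" for i t
  proof -
    have "{k\<in>{1..m}. b i + c k - a2 < 0} \<subseteq> {t+1..m}"
    proof
      fix k assume k: "k \<in> {k\<in>{1..m}. b i + c k - a2 < 0}"
      have "\<not> k \<le> t"
      proof
        assume "k \<le> t"
        then have "c t \<le> c k" using c_dec[of k t] k that by (cases "k = t") auto
        then show False using k that by auto
      qed
      then show "k \<in> {t+1..m}" using k by auto
    qed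
    then have "N i \<le> card {t+1..m}" unfolding N_def by (intro card_mono) auto
    then show ?thesis by simp
  qed
  have chain: "N i + (j - i) \<le> N j"
    if st: "\<forall>n. 1 \<le> n \<longrightarrow> n < m \<longrightarrow> N n < N (Suc n)" and ij: "1 \<le> i" "i \<le> j" "j \<le> m" for i j
  proof -
    have "j \<le> m \<longrightarrow> N i + (j - i) \<le> N j" using ij(2)
    proof (induction j rule: dec_induct)
      case base then show ?case by simp
    next
      case (step n)
      show ?case
      proof
        assume sm: "Suc n \<le> m"
        have "N n < N (Suc n)" using st ij(1) step(1) sm by simp
        moreover have "N i + (n - i) \<le> N n" using step.IH sm by simp
        moreover have "Suc n - i = Suc (n - i)" using step(1) by (simp add: Suc_diff_le)
        ultimately show "N i + (Suc n - i) \<le> N (Suc n)" by linarith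
      qed
    qed
    then show ?thesis using ij by simp
  qed
  have posI: "(\<forall>i\<in>{1..m}. 0 < dval m a2 b c i) \<longleftrightarrow> condI m a2 b c"
  proof
    assume A: "\<forall>i\<in>{1..m}. 0 < dval m a2 b c i"
    have par: "\<And>i. i\<in>{1..m} \<Longrightarrow> (even (i-1) \<longleftrightarrow> even (N i))" using sgn A by blast
    have st: "\<forall>n. 1 \<le> n \<longrightarrow> n < m \<longrightarrow> N n < N (Suc n)"
    proof (intro allI impI)
      fix n assume n: "1 \<le> n" "n < m"
      have "N n \<le> N (Suc n)" using Nmono n by simp
      moreover have "even (n-1) \<longleftrightarrow> even (N n)" using par n by simp
      moreover have "even n \<longleftrightarrow> even (N (Suc n))" using par[of "Suc n"] n by simp
      moreover have "even (n-1) \<longleftrightarrow> \<not> even n" using n by (cases n) auto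
      ultimately show "N n < N (Suc n)" by (metis le_neq_implies_less)
    qed
    have "even (m-1) \<longleftrightarrow> even (N m)" using par m2 by simp
    moreover have "even (m-1) \<longleftrightarrow> \<not> even m" using m2 by (cases m) auto
    ultimately have "N m \<noteq> m" by auto
    then have Nm: "N m \<le> m - 1" using Nle[of m] by linarith
    have Ni: "N i = i - 1" if "i \<in> {1..m}" for i
      using chain[OF st, of 1 i] chain[OF st, of i m] that Nm by auto
    show "condI m a2 b c" unfolding condI_def
    proof (intro conjI ballI)
      fix i assume i: "i \<in> {1..m-1}"
      define j where "j = m + 1 - i"
      have j: "j \<in> {1..m}" "m + 1 - j = i" "2 \<le> j" using i m2 by (auto simp: j_def)
      have "\<not> b j + c i - a2 < 0"
      proof
        assume "b j + c i - a2 < 0"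
        then have "m+1-i \<le> N j" using Nlow[of j i] j(1) i by auto
        then show False using j Ni[of j] i by auto
      qed
      moreover have "b j + c i - a2 \<noteq> 0" using nonzero[of j i] j i by auto
      ultimately show "b (m + 1 - i) + c i > a2" using j_def by simp
      have "\<not> b j + c (i+1) - a2 > 0"
      proof
        assume "b j + c (i+1) - a2 > 0"
        then have "N j \<le> m - (i+1)" using Nhigh[of j "i+1"] j(1) i by auto
        then show False using j Ni[of j] i by auto
      qed
      moreover have "b j + c (i+1) - a2 \<noteq> 0" using nonzero[of j "i+1"] j i by auto
      ultimately show "a2 > b (m + 1 - i) + c (i + 1)" using j_def by simp
    next
      have "\<not> b 1 + c m - a2 < 0" using Nlow[of 1 m] Ni[of 1] m2 by auto
      moreover have "b 1 + c m - a2 \<noteq> 0" using nonzero[of 1 m] m2 by auto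
      ultimately show "b 1 + c m > a2" by simp
    qed
  next
    assume C: "condI m a2 b c"
    show "\<forall>i\<in>{1..m}. 0 < dval m a2 b c i"
    proof
      fix j assume j: "j \<in> {1..m}"
      have up: "N j \<le> j - 1"
      proof -
        have "b j + c (m+1-j) - a2 > 0"
        proof (cases "j = 1")
          case True then show ?thesis using C unfolding condI_def by simp
        next
          case False
          then have i: "m + 1 - j \<in> {1..m-1}" "m + 1 - (m + 1 - j) = j" using j by auto
          from C i(1) have "b (m+1-(m+1-j)) + c (m+1-j) > a2" unfolding condI_def by blast
          then show ?thesis using i(2) by simp
        qed
        moreover have "m+1-j \<in> {1..m}" using j by auto
        ultimately have "N j \<le> m - (m+1-j)" using Nhigh[of j "m+1-j"] j by blast
        then show ?thesis using j by simp
      qed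
      have lo: "j - 1 \<le> N j"
      proof (cases "j = 1")
        case True then show ?thesis by simp
      next
        case False
        then have i: "m + 1 - j \<in> {1..m-1}" "m + 1 - (m + 1 - j) = j" "m + 1 - j + 1 = m + 2 - j" using j by auto
        from C i(1) have "a2 > b (m+1-(m+1-j)) + c (m+1-j+1)" unfolding condI_def by blast
        then have "b j + c (m+2-j) - a2 < 0" using i(2,3) by simp
        moreover have "m+2-j \<in> {1..m}" using j False by auto
        ultimately have "m + 1 - (m+2-j) \<le> N j" using Nlow[of j "m+2-j"] j by blast
        then show ?thesis using j False by simp
      qed
      have "N j = j - 1" using up lo by simp
      then have "even (j-1) \<longleftrightarrow> even (N j)" by simp
      then show "0 < dval m a2 b c j" using sgn[OF j] by blast
    qed
  qed
  have negII: "(\<forall>i\<in>{1..m}. dval m a2 b c i < 0) \<longleftrightarrow> condII m a2 b c"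
  proof
    assume A: "\<forall>i\<in>{1..m}. dval m a2 b c i < 0"
    have par: "\<And>i. i\<in>{1..m} \<Longrightarrow> \<not> (even (i-1) \<longleftrightarrow> even (N i))" using sgn A by blast
    have st: "\<forall>n. 1 \<le> n \<longrightarrow> n < m \<longrightarrow> N n < N (Suc n)"
    proof (intro allI impI)
      fix n assume n: "1 \<le> n" "n < m"
      have "N n \<le> N (Suc n)" using Nmono n by simp
      moreover have "\<not> (even (n-1) \<longleftrightarrow> even (N n))" using par n by simp
      moreover have "\<not> (even n \<longleftrightarrow> even (N (Suc n)))" using par[of "Suc n"] n by simp
      moreover have "even (n-1) \<longleftrightarrow> \<not> even n" using n by (cases n) auto
      ultimately show "N n < N (Suc n)" by (metis le_neq_implies_less)
    qed
    have "\<not> (even (1-1) \<longleftrightarrow> even (N 1))" using par[of 1] m2 by simp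
    then have "N 1 \<noteq> 0" by (metis dvd_0_right diff_self_eq_0)
    then have N1: "1 \<le> N 1" by simp
    have Ni: "N i = i" if "i \<in> {1..m}" for i
      using chain[OF st, of 1 i] chain[OF st, of i m] that N1 Nle[of m] by auto
    show "condII m a2 b c" unfolding condII_def
    proof (intro conjI ballI)
      fix i assume i: "i \<in> {1..m-1}"
      have ii: "i \<in> {1..m}" "m - i \<in> {1..m}" "m + 1 - i \<in> {1..m}" using i by auto
      have "\<not> b i + c (m-i) - a2 < 0"
      proof
        assume "b i + c (m-i) - a2 < 0"
        then have "m + 1 - (m-i) \<le> N i" using Nlow[of i "m-i"] ii by blast
        then show False using Ni[OF ii(1)] i by auto
      qed
      moreover have "b i + c (m-i) - a2 \<noteq> 0" using nonzero[of i "m-i"] ii by blast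
      ultimately show "b i + c (m - i) > a2" by simp
      have "\<not> b i + c (m+1-i) - a2 > 0"
      proof
        assume "b i + c (m+1-i) - a2 > 0"
        then have "N i \<le> m - (m+1-i)" using Nhigh[of i "m+1-i"] ii by blast
        then show False using Ni[OF ii(1)] i by auto
      qed
      moreover have "b i + c (m+1-i) - a2 \<noteq> 0" using nonzero[of i "m+1-i"] ii by blast
      ultimately show "a2 > b i + c (m + 1 - i)" by simp
    next
      have mm: "m \<in> {1..m}" "(1::nat) \<in> {1..m}" using m2 by auto
      have "\<not> b m + c 1 - a2 > 0"
      proof
        assume "b m + c 1 - a2 > 0"
        then have "N m \<le> m - 1" using Nhigh[of m 1] mm by blast
        then show False using Ni[OF mm(1)] m2 by auto
      qed
      moreover have "b m + c 1 - a2 \<noteq> 0" using nonzero[of m 1] mm by blast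
      ultimately show "a2 > b m + c 1" by simp
    qed
  next
    assume C: "condII m a2 b c"
    show "\<forall>i\<in>{1..m}. dval m a2 b c i < 0"
    proof
      fix j assume j: "j \<in> {1..m}"
      have up: "N j \<le> j"
      proof (cases "j = m")
        case True then show ?thesis using Nle[of j] by simp
      next
        case False
        then have i: "j \<in> {1..m-1}" "m - j \<in> {1..m}" using j by auto
        from C i(1) have "b j + c (m-j) > a2" unfolding condII_def by blast
        then have "N j \<le> m - (m-j)" using Nhigh[of j "m-j"] j i by auto
        then show ?thesis using j by simp
      qed
      have lo: "j \<le> N j"
      proof -
        have "a2 > b j + c (m+1-j)"
        proof (cases "j = m")
          case True then show ?thesis using C unfolding condII_def by simp
        next
          case False
          then have i: "j \<in> {1..m-1}" using j by auto
          from C i(1) show ?thesis unfolding condII_def by blast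
        qed
        moreover have "m+1-j \<in> {1..m}" using j by auto
        ultimately have "m + 1 - (m+1-j) \<le> N j" using Nlow[of j "m+1-j"] j by auto
        then show ?thesis using j by simp
      qed
      have "N j = j" using up lo by simp
      moreover have "even (j-1) \<longleftrightarrow> \<not> even j" using j by (cases j) auto
      ultimately have "\<not> (even (j-1) \<longleftrightarrow> even (N j))" by simp
      then show "dval m a2 b c j < 0" using sgn[OF j] by blast
    qed
  qed
  have vne: "v i \<noteq> (\<lambda>_. 0)" if "i \<in> {1..m}" for i
  proof
    assume "v i = (\<lambda>_. 0)"
    then have "v i i = 0" by simp
    then show False using v_one[OF that] by simp
  qed
  have vall: "\<forall>i\<in>{1..m}. v i \<in> vsp m" using v_sp by blast
  have quad: "F (\<lambda>k. \<Sum>i\<in>{1..m}. \<alpha> i * v i k) (\<lambda>k. \<Sum>i\<in>{1..m}. \<alpha> i * v i k)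
      = (\<Sum>i\<in>{1..m}. \<alpha> i * \<alpha> i * dval m a2 b c i)" for \<alpha>
  proof -
    define x where "x = (\<lambda>k. \<Sum>i\<in>{1..m}. \<alpha> i * v i k)"
    have xv: "x \<in> vsp m" unfolding x_def by (rule vsp_sum) (use vall in auto)
    have "F x x = (\<Sum>i\<in>{1..m}. \<alpha> i * F (v i) x)"
      unfolding x_def[of] by (rule F_lin_sum[OF F_bil _ vall]) (use xv x_def in auto)
    also have "\<dots> = (\<Sum>i\<in>{1..m}. \<alpha> i * \<alpha> i * dval m a2 b c i)"
    proof (rule sum.cong)
      fix i assume i: "i \<in> {1..m}"
      have "F (v i) x = F x (v i)" using F_bil xv v_sp[OF i] unfolding sym_bilinear_on_def by blast
      also have "\<dots> = (\<Sum>j\<in>{1..m}. \<alpha> j * F (v j) (v i))"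
        unfolding x_def by (rule F_lin_sum[OF F_bil _ vall v_sp[OF i]]) simp
      also have "\<dots> = (\<Sum>j\<in>{1..m}. (if j = i then \<alpha> i * dval m a2 b c i else 0))"
        by (rule sum.cong) (use F_orth F_diag i in auto)
      also have "\<dots> = \<alpha> i * dval m a2 b c i" using i by simp
      finally show "\<alpha> i * F (v i) x = \<alpha> i * \<alpha> i * dval m a2 b c i" by simp
    qed simp
    finally show ?thesis unfolding x_def .
  qed
  have rep: "\<exists>\<alpha>. x = (\<lambda>k. \<Sum>i\<in>{1..m}. \<alpha> i * v i k)" if "x \<in> vsp m" for x
  proof -
    have "\<forall>k>m. x k = 0" using that unfolding vsp_def by auto
    then show ?thesis using span[of m v m x, OF v_sp v_one v_zero] that by auto
  qed
  have nz_alpha: "\<exists>i\<in>{1..m}. \<alpha> i \<noteq> 0" if "(\<lambda>k. \<Sum>i\<in>{1..m}. \<alpha> i * v i k) \<noteq> (\<lambda>_. 0)" for \<alpha>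
    using that by auto
  have pos_iff: "pos_definite_on m F \<longleftrightarrow> (\<forall>i\<in>{1..m}. 0 < dval m a2 b c i)"
  proof
    assume "pos_definite_on m F"
    then show "\<forall>i\<in>{1..m}. 0 < dval m a2 b c i"
      unfolding pos_definite_on_def using v_sp vne F_diag by metis
  next
    assume A: "\<forall>i\<in>{1..m}. 0 < dval m a2 b c i"
    show "pos_definite_on m F" unfolding pos_definite_on_def
    proof (intro ballI impI)
      fix x assume x: "x \<in> vsp m" "x \<noteq> (\<lambda>_. 0)"
      obtain \<alpha> where a: "x = (\<lambda>k. \<Sum>i\<in>{1..m}. \<alpha> i * v i k)" using rep[OF x(1)] by blast
      obtain i where i: "i \<in> {1..m}" "\<alpha> i \<noteq> 0" using nz_alpha x(2) a by blast
      have sq: "0 \<le> \<alpha> j * \<alpha> j" for j by simp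
      have sqi: "0 < \<alpha> i * \<alpha> i" using i(2) by (simp add: zero_less_mult_iff less_le)
      have "0 < (\<Sum>i\<in>{1..m}. \<alpha> i * \<alpha> i * dval m a2 b c i)"
      proof (rule sum_pos2[OF _ i(1)])
        show "0 < \<alpha> i * \<alpha> i * dval m a2 b c i" using A i(1) sqi by simp
        show "\<And>j. j \<in> {1..m} \<Longrightarrow> 0 \<le> \<alpha> j * \<alpha> j * dval m a2 b c j"
          using A sq by (simp add: less_imp_le)
      qed simp
      then show "0 < F x x" using quad a by simp
    qed
  qed
  have neg_iff: "neg_definite_on m F \<longleftrightarrow> (\<forall>i\<in>{1..m}. dval m a2 b c i < 0)"
  proof
    assume "neg_definite_on m F"
    then show "\<forall>i\<in>{1..m}. dval m a2 b c i < 0"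
      unfolding neg_definite_on_def using v_sp vne F_diag by metis
  next
    assume A: "\<forall>i\<in>{1..m}. dval m a2 b c i < 0"
    show "neg_definite_on m F" unfolding neg_definite_on_def
    proof (intro ballI impI)
      fix x assume x: "x \<in> vsp m" "x \<noteq> (\<lambda>_. 0)"
      obtain \<alpha> where a: "x = (\<lambda>k. \<Sum>i\<in>{1..m}. \<alpha> i * v i k)" using rep[OF x(1)] by blast
      obtain i where i: "i \<in> {1..m}" "\<alpha> i \<noteq> 0" using nz_alpha x(2) a by blast
      have sq: "0 \<le> \<alpha> j * \<alpha> j" for j by simp
      have sqi: "0 < \<alpha> i * \<alpha> i" using i(2) by (simp add: zero_less_mult_iff less_le)
      have "0 < (\<Sum>i\<in>{1..m}. - (\<alpha> i * \<alpha> i * dval m a2 b c i))"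
      proof (rule sum_pos2[OF _ i(1)])
        show "0 < - (\<alpha> i * \<alpha> i * dval m a2 b c i)" using A i(1) sqi by (simp add: mult_pos_neg)
        show "\<And>j. j \<in> {1..m} \<Longrightarrow> 0 \<le> - (\<alpha> j * \<alpha> j * dval m a2 b c j)"
          using A sq by (simp add: mult_nonneg_nonpos less_imp_le)
      qed simp
      then have "(\<Sum>i\<in>{1..m}. \<alpha> i * \<alpha> i * dval m a2 b c i) < 0" by (simp add: sum_negf)
      then show "F x x < 0" using quad a by simp
    qed
  qed
  have sumrev: "(\<Sum>i=1..m. b i) = (\<Sum>i=1..m. b (m + 1 - i))"
    by (rule sum.atLeastAtMost_rev)
  have sumrevc: "(\<Sum>i=1..m. c i) = (\<Sum>i=1..m. c (m + 1 - i))"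
    by (rule sum.atLeastAtMost_rev)
  have ne: "{1..m} \<noteq> {}" "finite {1..m}" using m2 by auto
  have aI: "a1 > a2" if C: "condI m a2 b c"
  proof -
    have t: "b (m+1-i) + c i > a2" if i: "i \<in> {1..m}" for i
    proof (cases "i = m")
      case True then show ?thesis using C unfolding condI_def by simp
    next
      case False then have "i \<in> {1..m-1}" using i by auto
      then show ?thesis using C unfolding condI_def by blast
    qed
    have "(\<Sum>i=1..m. a2) < (\<Sum>i=1..m. b (m+1-i) + c i)"
      by (rule sum_strict_mono[OF ne(2) ne(1)]) (use t in auto)
    also have "\<dots> = (\<Sum>i=1..m. b i + c i)" using sumrev by (simp add: sum.distrib)
    finally have "real m * a2 < (\<Sum>i=1..m. b i + c i)" by simp
    then show ?thesis using trace by (simp add: algebra_simps)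
  qed
  have aII: "a1 < a2" if C: "condII m a2 b c"
  proof -
    have t: "b i + c (m+1-i) < a2" if i: "i \<in> {1..m}" for i
    proof (cases "i = m")
      case True then show ?thesis using C unfolding condII_def by simp
    next
      case False then have "i \<in> {1..m-1}" using i by auto
      then show ?thesis using C unfolding condII_def by blast
    qed
    have "(\<Sum>i=1..m. b i + c (m+1-i)) < (\<Sum>i=1..m. a2)"
      by (rule sum_strict_mono[OF ne(2) ne(1)]) (use t in auto)
    moreover have "(\<Sum>i=1..m. b i + c (m+1-i)) = (\<Sum>i=1..m. b i + c i)" using sumrevc by (simp add: sum.distrib)
    ultimately have "(\<Sum>i=1..m. b i + c i) < real m * a2" by simp
    then show ?thesis using trace by (simp add: algebra_simps)
  qed
  show ?thesis using pos_iff neg_iff posI negII aI aII by blast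
qed

end
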